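(* Let $n,r,k$ be positive integers with $n\ge 2r$. Then $\gamma_{\times k,t}(K(n,r))=k+r$ if and only if $n\ge r(k+r)$. Moreover, for every $n\ge r(k+r)$, every $k$-tuple total dominating set of $K(n,r)$ of cardinality $\gamma_{\times k,t}(K(n,r))$ is a clique (i.e., consists of pairwise disjoint $r$-sets).
   Context: For integers $n\ge 2r$, the Kneser graph $K(n,r)$ has as vertices the $r$-element subsets of $[n]=\{1,\dots,n\}$, two vertices being adjacent iff they are disjoint. For a graph $G$ and positive integer $k$, a set $D\subseteq V(G)$ is a $k$-tuple total dominating set if $|N_G(u)\cap D|\ge k$ for every $u\in V(G)$ ($N_G(u)$ the open neighborhood); $\gamma_{\times k,t}(G)$ is the minimum cardinality of such a set (defined when the minimum degree of $G$ is at least $k$). *)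

theory Defs
  imports Main
begin

definition kneser_vertices :: "nat \<Rightarrow> nat \<Rightarrow> nat set set" where
  "kneser_vertices n r = {A. A \<subseteq> {1..n} \<and> card A = r}"

definition kneser_adj :: "nat set \<Rightarrow> nat set \<Rightarrow> bool" where
  "kneser_adj A B \<longleftrightarrow> A \<noteq> B \<and> A \<inter> B = {}"

definition kneser_nbhd :: "nat \<Rightarrow> nat \<Rightarrow> nat set \<Rightarrow> nat set set" where
  "kneser_nbhd n r u = {v \<in> kneser_vertices n r. kneser_adj u v}"

definition is_ktuple_tds :: "nat \<Rightarrow> nat \<Rightarrow> nat \<Rightarrow> nat set set \<Rightarrow> bool" where
  "is_ktuple_tds n r k D \<longleftrightarrow> D \<subseteq> kneser_vertices n r \<and>
     (\<forall>u \<in> kneser_vertices n r. card (kneser_nbhd n r u \<inter> D) \<ge> k)"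

text \<open>k-tuple total domination number (meaningful only when some k-tuple TDS exists,
  i.e. when the minimum degree is at least k).\<close>
definition gamma_ktuple_t :: "nat \<Rightarrow> nat \<Rightarrow> nat \<Rightarrow> nat" where
  "gamma_ktuple_t n r k = (LEAST m. \<exists>D. is_ktuple_tds n r k D \<and> card D = m)"

definition is_kneser_clique :: "nat set set \<Rightarrow> bool" where
  "is_kneser_clique D \<longleftrightarrow> (\<forall>A \<in> D. \<forall>B \<in> D. A \<noteq> B \<longrightarrow> kneser_adj A B)"

end

theory Submission
  imports Defs
begin

definition hitset :: "nat set set \<Rightarrow> nat set \<Rightarrow> nat set set" where
  "hitset D u = {B \<in> D. B \<inter> u \<noteq> {}}"

lemma greedy:
  assumes fin: "finite D" and mem: "\<And>B. B \<in> D \<Longrightarrow> B \<subseteq> {1..n} \<and> B \<noteq> {}"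
  shows "S \<subseteq> {1..n} \<Longrightarrow> card S + j \<le> n \<Longrightarrow> \<exists>T. S \<subseteq> T \<and> T \<subseteq> {1..n} \<and> card T = card S + j
     \<and> card (hitset D T) \<ge> min (card D) (card (hitset D S) + j)"
proof (induction j)
  case 0
  then show ?case by auto
next
  case (Suc j)
  then obtain T where T: "S \<subseteq> T" "T \<subseteq> {1..n}" "card T = card S + j"
     "card (hitset D T) \<ge> min (card D) (card (hitset D S) + j)" by fastforce
  have finT: "finite T" using T(2) finite_subset by blast
  show ?case
  proof (cases "hitset D T = D")
    case True
    have "\<not> {1..n} \<subseteq> T"
    proof
      assume "{1..n} \<subseteq> T"
      then have "T = {1..n}" using T(2) by blast
      then show False using T(3) Suc.prems by simp
    qed
    then obtain y where y: "y \<in> {1..n}" "y \<notin> T" by blast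
    have "hitset D (insert y T) = D" using True unfolding hitset_def by blast
    then show ?thesis using T y finT
      by (intro exI[of _ "insert y T"]) auto
  next
    case False
    then obtain B where B: "B \<in> D" "B \<inter> T = {}" unfolding hitset_def by blast
    then obtain y where y: "y \<in> B" using mem by blast
    have yT: "y \<notin> T" using B y by blast
    have yn: "y \<in> {1..n}" using mem B y by blast
    have sub: "insert B (hitset D T) \<subseteq> hitset D (insert y T)"
      using B y unfolding hitset_def by blast
    have Bn: "B \<notin> hitset D T" using B unfolding hitset_def by blast
    have fh: "finite (hitset D (insert y T))" using fin unfolding hitset_def by simp
    have fh2: "finite (hitset D T)" using fin unfolding hitset_def by simp
    have "card (insert B (hitset D T)) \<le> card (hitset D (insert y T))"
      using card_mono[OF fh sub] .
    then have "card (hitset D T) + 1 \<le> card (hitset D (insert y T))"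
      using Bn fh2 by simp
    then have "card (hitset D (insert y T)) \<ge> min (card D) (card (hitset D S) + Suc j)"
      using T(4) by linarith
    then show ?thesis using T yT yn finT
      by (intro exI[of _ "insert y T"]) auto
  qed
qed

lemma verts_fin: "finite (kneser_vertices n r)"
proof -
  have "kneser_vertices n r \<subseteq> Pow {1..n}" unfolding kneser_vertices_def by blast
  then show ?thesis using finite_subset by blast
qed

lemma nbhd_eq:
  assumes "r \<ge> 1" "D \<subseteq> kneser_vertices n r"
  shows "kneser_nbhd n r u \<inter> D = D - hitset D u"
proof -
  have "\<And>v. v \<in> D \<Longrightarrow> v \<noteq> {}" using assms unfolding kneser_vertices_def by fastforce
  then show ?thesis using assms unfolding kneser_nbhd_def kneser_adj_def hitset_def by blast
qed

lemma nbhd_card: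
  assumes "r \<ge> 1" "D \<subseteq> kneser_vertices n r"
  shows "card (kneser_nbhd n r u \<inter> D) = card D - card (hitset D u)"
proof -
  have "finite D" using assms(2) verts_fin finite_subset by blast
  moreover have "hitset D u \<subseteq> D" unfolding hitset_def by blast
  ultimately show ?thesis using nbhd_eq[OF assms] card_Diff_subset finite_subset by metis
qed

lemma mem_props:
  assumes "r \<ge> 1" "D \<subseteq> kneser_vertices n r" "B \<in> D"
  shows "B \<subseteq> {1..n} \<and> B \<noteq> {}"
  using assms unfolding kneser_vertices_def by fastforce

lemma lower:
  assumes r: "r \<ge> 1" and k: "k \<ge> 1" and n: "n \<ge> 2 * r" and D: "is_ktuple_tds n r k D"
  shows "card D \<ge> k + r"
proof -
  have Dv: "D \<subseteq> kneser_vertices n r" using D unfolding is_ktuple_tds_def by blast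
  have fin: "finite D" using Dv verts_fin finite_subset by blast
  obtain T where T: "T \<subseteq> {1..n}" "card T = r" "card (hitset D T) \<ge> min (card D) r"
    using greedy[OF fin mem_props[OF r Dv], of "{}" r] n by auto
  have "T \<in> kneser_vertices n r" using T unfolding kneser_vertices_def by blast
  then have "card (kneser_nbhd n r T \<inter> D) \<ge> k" using D unfolding is_ktuple_tds_def by blast
  then have "card D - card (hitset D T) \<ge> k" using nbhd_card[OF r Dv] by simp
  then show ?thesis using T(3) k by linarith
qed

lemma clique:
  assumes r: "r \<ge> 1" and k: "k \<ge> 1" and n: "n \<ge> 2 * r" and D: "is_ktuple_tds n r k D"
    and c: "card D = k + r"
  shows "is_kneser_clique D"
  unfolding is_kneser_clique_def
proof (intro ballI impI)
  fix A B assume A: "A \<in> D" and B: "B \<in> D" and AB: "A \<noteq> B"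
  have Dv: "D \<subseteq> kneser_vertices n r" using D unfolding is_ktuple_tds_def by blast
  have fin: "finite D" using Dv verts_fin finite_subset by blast
  show "kneser_adj A B"
  proof (rule ccontr)
    assume "\<not> kneser_adj A B"
    then obtain x where x: "x \<in> A" "x \<in> B" using AB unfolding kneser_adj_def by blast
    have xn: "x \<in> {1..n}" using mem_props[OF r Dv A] x by blast
    have "{A, B} \<subseteq> hitset D {x}" using A B x unfolding hitset_def by blast
    moreover have "finite (hitset D {x})" using fin unfolding hitset_def by simp
    ultimately have h2: "card (hitset D {x}) \<ge> 2" using AB
      by (metis card_2_iff card_mono)
    obtain T where T: "T \<subseteq> {1..n}" "card T = 1 + (r - 1)"
        "card (hitset D T) \<ge> min (card D) (card (hitset D {x}) + (r - 1))"
      using greedy[OF fin mem_props[OF r Dv], of "{x}" "r - 1"] n xn r by auto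
    have "T \<in> kneser_vertices n r" using T r unfolding kneser_vertices_def by auto
    then have "card (kneser_nbhd n r T \<inter> D) \<ge> k" using D unfolding is_ktuple_tds_def by blast
    then have "card D - card (hitset D T) \<ge> k" using nbhd_card[OF r Dv] by simp
    then show False using T(3) h2 c r k by linarith
  qed
qed

lemma clique_hit:
  assumes "is_kneser_clique D" "finite u"
  shows "card (hitset D u) \<le> card u"
proof -
  have eq: "hitset D u = (\<Union>x\<in>u. {B \<in> D. x \<in> B})" unfolding hitset_def by blast
  have le1: "card {B \<in> D. x \<in> B} \<le> 1" for x
  proof -
    have "\<And>B C. B \<in> {B \<in> D. x \<in> B} \<Longrightarrow> C \<in> {B \<in> D. x \<in> B} \<Longrightarrow> B = C"
      using assms(1) unfolding is_kneser_clique_def kneser_adj_def by blast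
    then show ?thesis
    proof (cases "finite {B \<in> D. x \<in> B}")
      case True
      then show ?thesis using card_le_Suc0_iff_eq[OF True] \<open>\<And>B C. _ \<Longrightarrow> _ \<Longrightarrow> B = C\<close>
        by (simp only: One_nat_def) blast
    qed simp
  qed
  have "card (hitset D u) \<le> (\<Sum>x\<in>u. card {B \<in> D. x \<in> B})"
    unfolding eq by (rule card_UN_le[OF assms(2)])
  also have "\<dots> \<le> (\<Sum>x\<in>u. 1)" by (rule sum_mono) (rule le1)
  finally show ?thesis by simp
qed

lemma clique_tds:
  assumes r: "r \<ge> 1" and Dv: "D \<subseteq> kneser_vertices n r" and cl: "is_kneser_clique D"
    and c: "card D = k + r"
  shows "is_ktuple_tds n r k D"
  unfolding is_ktuple_tds_def
proof (intro conjI ballI Dv)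
  fix u assume u: "u \<in> kneser_vertices n r"
  have "finite u" "card u = r" using u unfolding kneser_vertices_def
    by (auto intro: finite_subset)
  then have "card (hitset D u) \<le> r" using clique_hit[OF cl, of u] by simp
  then show "card (kneser_nbhd n r u \<inter> D) \<ge> k" using nbhd_card[OF r Dv] c by simp
qed

lemma clique_size:
  assumes r: "r \<ge> 1" and Dv: "D \<subseteq> kneser_vertices n r" and cl: "is_kneser_clique D"
  shows "r * card D \<le> n"
proof -
  have fin: "finite D" using Dv verts_fin finite_subset by blast
  have fB: "\<And>B. B \<in> D \<Longrightarrow> finite B \<and> card B = r" using Dv unfolding kneser_vertices_def
    by (auto intro: finite_subset)
  have "card (\<Union>D) = (\<Sum>B\<in>D. card B)"
  proof (rule card_Union_disjoint)
    show "pairwise disjnt D"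
      using cl unfolding is_kneser_clique_def kneser_adj_def pairwise_def disjnt_def by blast
    show "\<And>A. A \<in> D \<Longrightarrow> finite A" using fB by blast
  qed
  also have "\<dots> = r * card D" using fB by simp
  finally have e: "card (\<Union>D) = r * card D" .
  have "\<Union>D \<subseteq> {1..n}" using Dv unfolding kneser_vertices_def by blast
  then have "card (\<Union>D) \<le> card {1..n}" by (intro card_mono) auto
  then have "card (\<Union>D) \<le> n" by simp
  then show ?thesis using e by simp
qed

definition blocks :: "nat \<Rightarrow> nat \<Rightarrow> nat set set" where
  "blocks r m = (\<lambda>i. {r*i+1..r*i+r}) ` {..<m}"

lemma blocks_props:
  assumes r: "r \<ge> 1" and n: "n \<ge> r * m"
  shows "blocks r m \<subseteq> kneser_vertices n r" "is_kneser_clique (blocks r m)" "card (blocks r m) = m"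
proof -
  show "blocks r m \<subseteq> kneser_vertices n r"
  proof
    fix B assume "B \<in> blocks r m"
    then obtain i where i: "i < m" "B = {r*i+1..r*i+r}" unfolding blocks_def by blast
    have "r * i + r \<le> r * m" using mult_le_mono2[of "i+1" m r] i(1) by simp
    then have "B \<subseteq> {1..n}" using i(2) n by auto
    moreover have "card B = r" using i(2) by simp
    ultimately show "B \<in> kneser_vertices n r" unfolding kneser_vertices_def by blast
  qed
  have dis: "{r*i+1..r*i+r} \<inter> {r*j+1..r*j+r} = {}" if ij: "i \<noteq> j" for i j
  proof (rule ccontr)
    assume "{r*i+1..r*i+r} \<inter> {r*j+1..r*j+r} \<noteq> {}"
    then obtain x where "x \<in> {r*i+1..r*i+r} \<inter> {r*j+1..r*j+r}" by blast
    then have x: "r*i+1 \<le> x" "x \<le> r*i+r" "r*j+1 \<le> x" "x \<le> r*j+r" by auto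
    show False
    proof (cases "i < j")
      case True
      then have "r*i+r \<le> r*j" using mult_le_mono2[of "i+1" j r] by simp
      then show ?thesis using x by linarith
    next
      case False
      then have "j < i" using ij by simp
      then have "r*j+r \<le> r*i" using mult_le_mono2[of "j+1" i r] by simp
      then show ?thesis using x by linarith
    qed
  qed
  have ne: "{r*i+1..r*i+r} \<noteq> {}" for i using r by simp
  show "is_kneser_clique (blocks r m)"
    unfolding is_kneser_clique_def
  proof (intro ballI impI)
    fix A B assume A: "A \<in> blocks r m" and B: "B \<in> blocks r m" and AB: "A \<noteq> B"
    obtain i where i: "A = {r*i+1..r*i+r}" using A unfolding blocks_def by blast
    obtain j where j: "B = {r*j+1..r*j+r}" using B unfolding blocks_def by blast
    have "i \<noteq> j" using AB i j by blast
    then have "A \<inter> B = {}" using dis i j by blast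
    then show "kneser_adj A B" using AB unfolding kneser_adj_def by blast
  qed
  have "inj_on (\<lambda>i. {r*i+1..r*i+r}) {..<m}"
  proof (rule inj_onI)
    fix i j assume eq: "{r*i+1..r*i+r} = {r*j+1..r*j+r}"
    have e: "{r*i+1..r*i+r} \<inter> {r*j+1..r*j+r} = {r*i+1..r*i+r}" unfolding eq by (rule Int_absorb)
    show "i = j"
    proof (rule ccontr)
      assume "i \<noteq> j"
      then have "{r*i+1..r*i+r} = {}" using dis[OF \<open>i \<noteq> j\<close>] e by (simp only:)
      then show False using ne[of i] by (simp only:)
    qed
  qed
  then show "card (blocks r m) = m" unfolding blocks_def using card_image by fastforce
qed

theorem theorem3p2:
  fixes n r k :: nat
  assumes "r \<ge> 1" and "k \<ge> 1" and "n \<ge> 2 * r"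
  shows "(((\<exists>D. is_ktuple_tds n r k D) \<and> gamma_ktuple_t n r k = k + r)
            \<longleftrightarrow> n \<ge> r * (k + r))
       \<and> (n \<ge> r * (k + r) \<longrightarrow>
            (\<forall>D. is_ktuple_tds n r k D \<and> card D = gamma_ktuple_t n r k
                 \<longrightarrow> is_kneser_clique D))"
proof -
  have g: "gamma_ktuple_t n r k = k + r" if big: "n \<ge> r * (k + r)"
  proof -
    have "is_ktuple_tds n r k (blocks r (k + r))"
      using clique_tds[OF assms(1) blocks_props[OF assms(1) big]] blocks_props[OF assms(1) big] by simp
    then have ex: "\<exists>D. is_ktuple_tds n r k D \<and> card D = k + r"
      using blocks_props[OF assms(1) big] by blast
    show ?thesis unfolding gamma_ktuple_t_def
      apply (rule Least_equality)
      using ex lower[OF assms] by auto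
  qed
  have A: "((\<exists>D. is_ktuple_tds n r k D) \<and> gamma_ktuple_t n r k = k + r) \<longleftrightarrow> n \<ge> r * (k + r)"
  proof
    assume h: "(\<exists>D. is_ktuple_tds n r k D) \<and> gamma_ktuple_t n r k = k + r"
    then obtain D0 where "is_ktuple_tds n r k D0" by blast
    then have "\<exists>m. \<exists>D. is_ktuple_tds n r k D \<and> card D = m" by blast
    then have "\<exists>D. is_ktuple_tds n r k D \<and> card D = gamma_ktuple_t n r k"
      unfolding gamma_ktuple_t_def by (rule LeastI_ex)
    then obtain D where D: "is_ktuple_tds n r k D" "card D = k + r" using h by auto
    have "is_kneser_clique D" using clique[OF assms D] .
    moreover have "D \<subseteq> kneser_vertices n r" using D unfolding is_ktuple_tds_def by blast
    ultimately show "n \<ge> r * (k + r)" using clique_size[OF assms(1)] D(2) by metis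
  next
    assume big: "n \<ge> r * (k + r)"
    have "is_ktuple_tds n r k (blocks r (k + r))"
      using clique_tds[OF assms(1) blocks_props[OF assms(1) big]] blocks_props[OF assms(1) big] by simp
    then show "(\<exists>D. is_ktuple_tds n r k D) \<and> gamma_ktuple_t n r k = k + r" using g[OF big] by blast
  qed
  show ?thesis using A g clique[OF assms] by auto
qed

end
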